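(* For every positive integer $n$ and every string $u$ of length $n$ over a finite alphabet, the sum of the exponents of all cubic runs in $u$ is less than $2.5\,n$.
   Context: For a word $u=u_1\cdots u_m$, the (shortest) period is the smallest positive integer $p$ with $u_i=u_{i+p}$ for all $1\le i\le m-p$; $u[i..j]=u_i\cdots u_j$. A run in $u$ is an interval $[i..j]$ such that the period $p$ of $u[i..j]$ satisfies $2p\le j-i+1$, and $u[i-1]\ne u[i+p-1]$ (or $i=1$) and $u[j-p+1]\ne u[j+1]$ (or $j=|u|$). Its exponent is $(j-i+1)/p$. A cubic run is a run $[i..j]$ whose shortest period $p$ satisfies $3p\le j-i+1$. *)

theory Defs
  imports Complex_Main
begin

text \<open>Words are lists; positions are 1-based as in the paper: letter k of u is u ! (k - 1).\<close>

definition letter :: "'a list \<Rightarrow> nat \<Rightarrow> 'a" where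
  "letter u k = u ! (k - 1)"

definition is_period :: "'a list \<Rightarrow> nat \<Rightarrow> nat \<Rightarrow> nat \<Rightarrow> bool" where
  "is_period u i j p \<longleftrightarrow> 0 < p \<and>
     (\<forall>k. i \<le> k \<and> k + p \<le> j \<longrightarrow> letter u k = letter u (k + p))"

definition per :: "'a list \<Rightarrow> nat \<Rightarrow> nat \<Rightarrow> nat" where
  "per u i j = (LEAST p. is_period u i j p)"

definition is_run :: "'a list \<Rightarrow> nat \<Rightarrow> nat \<Rightarrow> bool" where
  "is_run u i j \<longleftrightarrow> 1 \<le> i \<and> i \<le> j \<and> j \<le> length u \<and>
     2 * per u i j \<le> j - i + 1 \<and>
     (i = 1 \<or> letter u (i - 1) \<noteq> letter u (i + per u i j - 1)) \<and>
     (j = length u \<or> letter u (j - per u i j + 1) \<noteq> letter u (j + 1))"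

definition exponent :: "'a list \<Rightarrow> nat \<Rightarrow> nat \<Rightarrow> real" where
  "exponent u i j = real (j - i + 1) / real (per u i j)"

definition is_cubic_run :: "'a list \<Rightarrow> nat \<Rightarrow> nat \<Rightarrow> bool" where
  "is_cubic_run u i j \<longleftrightarrow> is_run u i j \<and> 3 * per u i j \<le> j - i + 1"

definition cubic_runs :: "'a list \<Rightarrow> (nat \<times> nat) set" where
  "cubic_runs u = {(i, j). is_cubic_run u i j}"

end

theory Submission
  imports Defs "HOL-Library.List_Lexorder"
begin


lemma lex_less_iff:
  fixes xs ys :: "int list"
  assumes "length xs = length ys"
  shows "xs < ys \<longleftrightarrow> (\<exists>d<length xs. (\<forall>k<d. xs!k = ys!k) \<and> xs!d < ys!d)"
proof -
  have "xs < ys \<longleftrightarrow> (\<exists>d<length xs. take d xs = take d ys \<and> xs!d < ys!d)"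
    unfolding list_less_def lexord_take_index_conv using assms by auto
  also have "\<dots> \<longleftrightarrow> (\<exists>d<length xs. (\<forall>k<d. xs!k = ys!k) \<and> xs!d < ys!d)"
  proof -
    have "take d xs = take d ys \<longleftrightarrow> (\<forall>k<d. xs!k = ys!k)" if "d < length xs" for d
      using that assms by (simp add: list_eq_iff_nth_eq)
    then show ?thesis by blast
  qed
  finally show ?thesis .
qed

lemma period_steps:
  assumes "is_period u i j p" "i \<le> k" "k + m * p \<le> j"
  shows "letter u k = letter u (k + m * p)"
  using assms(3)
proof (induction m)
  case 0 then show ?case by simp
next
  case (Suc m)
  have "letter u k = letter u (k + m*p)" using Suc by simp
  also have "\<dots> = letter u (k + m*p + p)"
    using assms(1,2) Suc.prems unfolding is_period_def by auto
  finally show ?case by (simp add: algebra_simps)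
qed

lemma per_is_period: "i \<le> j \<Longrightarrow> is_period u i j (per u i j)"
  unfolding per_def
  by (rule LeastI[of _ "j - i + 1"]) (auto simp: is_period_def)

lemma per_le: "is_period u i j q \<Longrightarrow> per u i j \<le> q"
  unfolding per_def by (rule Least_le)

lemma per_pos: "i \<le> j \<Longrightarrow> 0 < per u i j"
  using per_is_period is_period_def by blast



definition FF :: "('a \<Rightarrow> nat) \<Rightarrow> 'a list \<Rightarrow> nat \<Rightarrow> int" where
  "FF f u k = int (f (letter u k))"
definition VV :: "('a \<Rightarrow> nat) \<Rightarrow> 'a list \<Rightarrow> bool \<Rightarrow> nat \<Rightarrow> int" where
  "VV f u b k = (if b then FF f u k else - FF f u k)"
definition cp :: "nat \<Rightarrow> nat \<Rightarrow> nat \<Rightarrow> nat" where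
  "cp i p x = i + (x - i) mod p"
definition rot :: "('a \<Rightarrow> nat) \<Rightarrow> 'a list \<Rightarrow> bool \<Rightarrow> nat \<Rightarrow> nat \<Rightarrow> nat \<Rightarrow> int list" where
  "rot f u b i p x = map (\<lambda>k. VV f u b (cp i p (x + k))) [0..<p]"

lemma VV_letter: "letter u k = letter u k' \<Longrightarrow> VV f u b k = VV f u b k'"
  by (simp add: VV_def FF_def)

lemma VV_inj:
  assumes "inj_on f (set u)" "1 \<le> k" "k \<le> length u" "1 \<le> k'" "k' \<le> length u"
    "VV f u b k = VV f u b k'"
  shows "letter u k = letter u k'"
proof -
  have "letter u k \<in> set u" "letter u k' \<in> set u" using assms by (auto simp: letter_def)
  moreover have "f (letter u k) = f (letter u k')" using assms(6)
    by (cases b) (auto simp: VV_def FF_def)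
  ultimately show ?thesis using assms(1) by (meson inj_onD)
qed

lemma cp_ge: "i \<le> cp i p x" by (simp add: cp_def)
lemma cp_lt: "0 < p \<Longrightarrow> cp i p x < i + p" by (simp add: cp_def)

lemma cp_cp: "i \<le> x \<Longrightarrow> cp i p (cp i p x + k) = cp i p (x + k)"
proof -
  assume "i \<le> x"
  then have "x + k - i = (x - i) + k" by simp
  then show ?thesis by (simp add: cp_def mod_add_left_eq)
qed

lemma cp_letter:
  assumes "is_period u i j p" "i \<le> y" "y \<le> j"
  shows "letter u (cp i p y) = letter u y"
proof -
  have p: "0 < p" using assms(1) by (simp add: is_period_def)
  have "y = cp i p y + ((y - i) div p) * p"
    using assms(2) by (simp add: cp_def)
  then show ?thesis using period_steps[OF assms(1) cp_ge[of i p y], of "(y-i) div p"] assms(3) by metis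
qed

lemma cp_cover:
  assumes "0 < p" "i \<le> y" "i \<le> z"
  shows "\<exists>k<p. cp i p (z + k) = cp i p y"
proof -
  define t where "t = (z - i) mod p"
  define k where "k = ((y - i) mod p + p - t) mod p"
  have tp: "t < p" using assms(1) by (simp add: t_def)
  have "(z + k - i) mod p = (t + k) mod p"
    using assms(3) by (simp add: t_def mod_add_left_eq)
  also have "\<dots> = (t + ((y - i) mod p + p - t)) mod p" by (simp add: k_def mod_add_right_eq)
  also have "t + ((y - i) mod p + p - t) = (y - i) mod p + p" using tp by simp
  also have "((y - i) mod p + p) mod p = (y - i) mod p" by simp
  finally have "cp i p (z + k) = cp i p y" by (simp add: cp_def)
  moreover have "k < p" using assms(1) by (simp add: k_def)
  ultimately show ?thesis by blast
qed

lemma rot_nth: "k < p \<Longrightarrow> rot f u b i p x ! k = VV f u b (cp i p (x + k))"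
  by (simp add: rot_def)

lemma rot_nth_in:
  assumes "is_period u i j p" "k < p" "i \<le> x" "x + k \<le> j"
  shows "rot f u b i p x ! k = VV f u b (x + k)"
proof -
  have "letter u (cp i p (x + k)) = letter u (x + k)"
    using cp_letter[OF assms(1), of "x+k"] assms(3,4) by simp
  then have "VV f u b (cp i p (x + k)) = VV f u b (x + k)" by (rule VV_letter)
  then show ?thesis using rot_nth[OF assms(2), of f u b i x] by simp
qed

lemma rot_cp: "i \<le> x \<Longrightarrow> rot f u b i p (cp i p x) = rot f u b i p x"
  by (simp add: rot_def cp_cp)

lemma length_rot[simp]: "length (rot f u b i p x) = p" by (simp add: rot_def)



lemma all_equal_period1:
  assumes P: "is_period u i j p" and inj: "inj_on f (set u)" and ij: "1 \<le> i" "j \<le> length u"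
    and ia: "i \<le> a" and aj: "a + p \<le> j + 1"
    and eq: "\<forall>k<p. VV f u b (a + k) = c"
  shows "is_period u i j 1"
proof -
  have p: "0 < p" using P by (simp add: is_period_def)
  have all: "VV f u b y = c" if yy: "i \<le> y" "y \<le> j" for y
  proof -
    obtain t where t: "t < p" "cp i p (a + t) = cp i p y" using cp_cover[OF p yy(1) ia] by blast
    have "letter u y = letter u (cp i p y)" using cp_letter[OF P yy] by simp
    also have "\<dots> = letter u (a + t)" using t cp_letter[OF P, of "a+t"] ia aj by auto
    finally have "VV f u b y = VV f u b (a + t)" by (rule VV_letter)
    then show ?thesis using eq t by simp
  qed
  show ?thesis unfolding is_period_def
  proof (intro conjI allI impI)
    fix k assume k: "i \<le> k \<and> k + 1 \<le> j"
    have "VV f u b k = VV f u b (k+1)" using all k by simp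
    then show "letter u k = letter u (k + 1)"
      using VV_inj[OF inj] k ij by simp
  qed simp
qed

lemma first_lt:
  assumes P: "is_period u i j p" and inj: "inj_on f (set u)" and ij: "1 \<le> i" "j \<le> length u"
    and np1: "\<not> is_period u i j 1"
    and minr: "\<forall>y\<ge>i. M \<le> rot f u b i p y" and Ra: "rot f u b i p a = M"
    and ia: "i < a" and aj: "a + p \<le> j + 1" and p2: "2 \<le> p"
  shows "VV f u b a < VV f u b (a - 1)"
proof -
  define x where "x k = VV f u b (a + k)" for k
  have Rnth: "rot f u b i p y ! k = VV f u b (y + k)" if "k < p" "i \<le> y" "y + k \<le> j" for y k
    using rot_nth_in[OF P that] .
  have step1: "x 0 \<le> x k" if "k < p" for k
  proof (rule ccontr)
    assume "\<not> x 0 \<le> x k"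
    then have "rot f u b i p (a + k) ! 0 < rot f u b i p a ! 0"
      using Rnth[of 0 "a+k"] Rnth[of 0 a] that ia aj p2 by (simp add: x_def)
    then have "rot f u b i p (a + k) < rot f u b i p a"
      unfolding lex_less_iff[OF length_rot[THEN trans, OF length_rot[symmetric]]] length_rot
      using p2 by (intro exI[of _ 0]) simp
    moreover have "M \<le> rot f u b i p (a + k)" using minr ia by simp
    ultimately show False using Ra by simp
  qed
  have last: "VV f u b (a - 1) = x (p - 1)"
  proof -
    have "letter u (a - 1) = letter u (a - 1 + 1 * p)"
      using period_steps[OF P, of "a-1" 1] ia aj by simp
    moreover have "a - 1 + 1 * p = a + (p - 1)" using ia p2 by simp
    ultimately have "letter u (a - 1) = letter u (a + (p - 1))" by simp
    then show ?thesis unfolding x_def by (rule VV_letter)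
  qed
  show ?thesis
  proof (rule ccontr)
    assume "\<not> VV f u b a < VV f u b (a - 1)"
    then have c: "x (p - 1) = x 0" using step1[of "p-1"] last p2 by (simp add: x_def)
    have "\<exists>d<p. x d \<noteq> x 0"
    proof (rule ccontr)
      assume "\<not> (\<exists>d<p. x d \<noteq> x 0)"
      then have "\<forall>k<p. VV f u b (a + k) = x 0" by (simp add: x_def)
      from all_equal_period1[OF P inj ij _ aj this] ia np1 show False by simp
    qed
    then have ex: "\<exists>d. d < p \<and> x d \<noteq> x 0" by blast
    define d where "d = (LEAST d. d < p \<and> x d \<noteq> x 0)"
    have d12: "d < p \<and> x d \<noteq> x 0" unfolding d_def using LeastI_ex[OF ex] .
    have d3: "\<forall>k<d. x k = x 0"
    proof (intro allI impI)
      fix k assume "k < d"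
      then have "\<not> (k < p \<and> x k \<noteq> x 0)" unfolding d_def by (rule not_less_Least)
      then show "x k = x 0" using \<open>k < d\<close> d12 by simp
    qed
    have d: "d < p" "x d \<noteq> x 0" "\<forall>k<d. x k = x 0" using d12 d3 by blast+
    have ge: "x 0 \<le> x d" by (rule step1[OF d(1)])
    have ne: "x 0 \<noteq> x d" using d(2) by (rule not_sym)
    have gt: "x 0 < x d" using ge ne by (rule order.not_eq_order_implies_strict[rotated])
    have A: "rot f u b i p (a - 1) ! k = x 0" if "k \<le> d" for k
    proof (cases k)
      case 0
      then show ?thesis using Rnth[of 0 "a-1"] ia aj p2 last c by simp
    next
      case (Suc k')
      then have "rot f u b i p (a - 1) ! k = VV f u b (a - 1 + k)"
        using Rnth[of k "a-1"] ia aj that d(1) by simp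
      also have "a - 1 + k = a + k'" using Suc ia by simp
      moreover have "x k' = x 0" using Suc that by (intro d(3)[rule_format]) simp
      ultimately show ?thesis by (simp add: x_def)
    qed
    have B: "rot f u b i p a ! k = x k" if "k < p" for k
      using Rnth[of k a] that ia aj by (simp add: x_def)
    have "rot f u b i p (a - 1) < rot f u b i p a"
      unfolding lex_less_iff[OF length_rot[THEN trans, OF length_rot[symmetric]]] length_rot
    proof (intro exI[of _ d] conjI allI impI)
      show "d < p" by (rule d(1))
      fix k assume k: "k < d"
      then have "rot f u b i p (a - 1) ! k = x 0" using A by simp
      also have "\<dots> = x k" by (rule sym, rule d(3)[rule_format, OF k])
      also have "\<dots> = rot f u b i p a ! k" using B k d(1) by simp
      finally show "rot f u b i p (a - 1) ! k = rot f u b i p a ! k" .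
    next
      show "rot f u b i p (a - 1) ! d < rot f u b i p a ! d" using A[of d] B[of d] d(1) gt by simp
    qed
    moreover have "M \<le> rot f u b i p (a - 1)" using minr ia by simp
    ultimately show False using Ra by simp
  qed
qed



lemma cp_add_p: "i \<le> x \<Longrightarrow> cp i p (x + p) = cp i p x"
  by (simp add: cp_def) (metis Nat.add_diff_assoc2 mod_add_self2)

lemma same_order:
  assumes P: "is_period u i j p" and P': "is_period u i' j' p'" and inj: "inj_on f (set u)"
    and ij: "1 \<le> i" "1 \<le> i'" "j \<le> length u" "j' \<le> length u"
    and minper: "\<not> is_period u i' j' p"
    and minr: "\<forall>y\<ge>i. M \<le> rot f u b i p y" and Ra: "rot f u b i p a = M"
    and minr': "\<forall>y\<ge>i'. M' \<le> rot f u b i' p' y" and Ra': "rot f u b i' p' a = M'"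
    and ia: "i \<le> a" and aj: "a + p \<le> j + 1" and ia': "i' \<le> a" and aj': "a + p' \<le> j' + 1"
    and pp: "p < p'"
    and right: "j < length u \<Longrightarrow> VV f u b (j + 1) < VV f u b (j + 1 - p)"
  shows False
proof -
  have p: "0 < p" using P by (simp add: is_period_def)
  have p': "0 < p'" using P' by (simp add: is_period_def)
  show False
  proof (cases "a + p' \<le> j + 1")
    case True
    define R1 where "R1 = rot f u b i' p' (a + p)"
    define R0 where "R0 = rot f u b i' p' a"
    define Y where "Y = rot f u b i p (a + p' - p)"
    have R1a: "R1 ! k = VV f u b (a + p + k)" if "k < p' - p" for k
      unfolding R1_def using rot_nth_in[OF P', of k "a+p"] that ia' aj' by simp
    have R0a: "R0 ! k = VV f u b (a + k)" if "k < p'" for k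
      unfolding R0_def using rot_nth_in[OF P', of k "a"] that ia' aj' by simp
    have eqa: "VV f u b (a + p + k) = VV f u b (a + k)" if "k < p' - p" for k
    proof -
      have "letter u (a + k) = letter u (a + k + 1 * p)"
        using period_steps[OF P, of "a+k" 1] ia that True by simp
      then show ?thesis by (metis VV_letter add.commute add.left_commute mult_1)
    qed
    have R1b: "R1 ! (p' - p + t) = M ! t" if "t < p" for t
    proof -
      have "R1 ! (p' - p + t) = VV f u b (cp i' p' (a + p + (p' - p + t)))"
        unfolding R1_def using rot_nth[of "p'-p+t" p' f u b i' "a+p"] that pp by simp
      also have "a + p + (p' - p + t) = (a + t) + p'" using pp by simp
      also have "cp i' p' (a + t + p') = cp i' p' (a + t)" using cp_add_p ia' by simp
      also have "VV f u b (cp i' p' (a + t)) = VV f u b (a + t)"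
        using cp_letter[OF P', of "a+t"] that pp ia' aj' VV_letter by simp
      also have "\<dots> = M ! t" using rot_nth_in[OF P, of t a f b] that ia aj Ra by simp
      finally show ?thesis .
    qed
    have R0b: "R0 ! (p' - p + t) = Y ! t" if "t < p" for t
      using R0a[of "p' - p + t"] rot_nth_in[OF P, of t "a + p' - p"] that pp ia True
      unfolding Y_def by (simp add: ac_simps)
    have MY: "M \<le> Y" using minr ia pp unfolding Y_def by simp
    have "\<not> R0 < R1"
    proof
      assume "R0 < R1"
      then obtain d where d: "d < p'" "\<forall>k<d. R0 ! k = R1 ! k" "R0 ! d < R1 ! d"
        using lex_less_iff[of R0 R1] by (auto simp: R0_def R1_def)
      have "\<not> d < p' - p" using d(3) R1a R0a eqa by (metis d(1) less_irrefl)
      define t where "t = d - (p' - p)"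
      have t: "d = p' - p + t" "t < p" using d(1) pp \<open>\<not> d < p' - p\<close> by (auto simp: t_def)
      have lenY: "length Y = length M" using Ra by (auto simp: Y_def)
      have "Y < M"
        unfolding lex_less_iff[OF lenY]
      proof -
        show "\<exists>d<length Y. (\<forall>k<d. Y ! k = M ! k) \<and> Y ! d < M ! d"
        proof (intro exI[of _ t] conjI allI impI)
          show "t < length Y" using t by (simp add: Y_def)
          show "Y ! t < M ! t" using t d R0b R1b by simp
          fix k assume "k < t"
          then show "Y ! k = M ! k" using t d(2)[rule_format, of "p' - p + k"] R0b[of k] R1b[of k] by simp
        qed
      qed
      then show False using MY by simp
    qed
    moreover have "R0 \<le> R1" using minr' Ra' ia' unfolding R0_def R1_def by simp
    ultimately have R01: "R0 = R1" by simp
    have "is_period u i' j' p" unfolding is_period_def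
    proof (intro conjI allI impI)
      fix y assume y: "i' \<le> y \<and> y + p \<le> j'"
      obtain k where k: "k < p'" "cp i' p' (a + k) = cp i' p' y"
        using cp_cover[OF p', of i' y a] y ia' by auto
      have k2: "cp i' p' (a + p + k) = cp i' p' (y + p)"
        using cp_cp[of i' "a+k" p' p] cp_cp[of i' y p' p] k y ia' by (simp add: add_ac)
      have "VV f u b (cp i' p' (a + p + k)) = VV f u b (cp i' p' (a + k))"
        using R01 rot_nth[OF k(1)] unfolding R0_def R1_def by (metis add.assoc)
      then have "letter u (cp i' p' (a + p + k)) = letter u (cp i' p' (a + k))"
      proof (rule VV_inj[OF inj, rotated -1])
        have "i' + p' \<le> j' + 1" using aj' ia' by simp
        then show "1 \<le> cp i' p' (a + p + k)" "cp i' p' (a + p + k) \<le> length u"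
             "1 \<le> cp i' p' (a + k)" "cp i' p' (a + k) \<le> length u"
          using cp_ge[of i' p'] cp_lt[OF p', of i'] ij
          by (smt (verit) Suc_eq_plus1 le_trans less_Suc_eq_le less_le_trans)+
      qed
      then show "letter u y = letter u (y + p)"
        using k k2 cp_letter[OF P', of y] cp_letter[OF P', of "y+p"] y by auto
    qed (use p in simp)
    then show False using minper by simp
  next
    case False
    then have jn: "j < length u" using aj' ij by linarith
    define m where "m = (j + 1 - a) div p"
    define s where "s = a + m * p"
    define d where "d = j + 1 - s"
    have m1: "1 \<le> m"
    proof -
      have "p div p \<le> (j + 1 - a) div p" using aj by (intro div_le_mono) simp
      then show ?thesis using p by (simp add: m_def)
    qed
    have mp: "m * p \<le> j + 1 - a" unfolding m_def by (rule div_times_less_eq_dividend)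
    have sj: "s \<le> j + 1" using mp aj by (simp add: s_def)
    have "d = (j + 1 - a) - m * p" using mp aj by (simp add: d_def s_def)
    also have "\<dots> = (j + 1 - a) mod p" unfolding m_def by (rule minus_div_mult_eq_mod)
    finally have dp: "d < p" using p by simp
    have "rot f u b i' p' s < rot f u b i' p' a"
      unfolding lex_less_iff[OF length_rot[THEN trans, OF length_rot[symmetric]]] length_rot
    proof (intro exI[of _ d] conjI allI impI)
      show "d < p'" using dp pp by simp
      fix k assume k: "k < d"
      have "rot f u b i' p' s ! k = VV f u b (s + k)"
        using rot_nth_in[OF P', of k s] k dp pp ia' sj aj' False by (simp add: s_def d_def)
      also have "letter u (s + k) = letter u (a + k)"
        using period_steps[OF P, of "a + k" m] ia k by (simp add: s_def d_def add_ac)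
      then have "VV f u b (s + k) = VV f u b (a + k)" by (rule VV_letter)
      also have "\<dots> = rot f u b i' p' a ! k"
        using rot_nth_in[OF P', of k a] k dp pp ia' aj' by simp
      finally show "rot f u b i' p' s ! k = rot f u b i' p' a ! k" .
    next
      have "rot f u b i' p' s ! d = VV f u b (j + 1)"
        using rot_nth_in[OF P', of d s] dp pp ia' sj aj' False by (simp add: s_def d_def)
      also have "\<dots> < VV f u b (j + 1 - p)" using right jn by simp
      also have "letter u (j + 1 - p) = letter u (a + d)"
      proof -
        have "a + d + (m - 1) * p = j + 1 - p"
        proof -
          have "(m - 1) * p + p = m * p" using m1 by (metis Suc_diff_le diff_Suc_1 mult_Suc add.commute)
          then show ?thesis using sj by (simp add: d_def s_def)
        qed
        moreover have "a + d + (m - 1) * p \<le> j" using calculation p aj by linarith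
        ultimately show ?thesis using period_steps[OF P, of "a + d" "m - 1"] ia by simp
      qed
      then have "VV f u b (j + 1 - p) = VV f u b (a + d)" by (rule VV_letter)
      also have "\<dots> = rot f u b i' p' a ! d"
        using rot_nth_in[OF P', of d a] dp pp ia' aj' by simp
      finally show "rot f u b i' p' s ! d < rot f u b i' p' a ! d" .
    qed
    moreover have "M' \<le> rot f u b i' p' s" using minr' ia' by (simp add: s_def)
    ultimately show False using Ra' by simp
  qed
qed



definition ob :: "('a \<Rightarrow> nat) \<Rightarrow> 'a list \<Rightarrow> nat \<Rightarrow> nat \<Rightarrow> bool" where
  "ob f u i j = (j = length u \<or> FF f u (j+1) < FF f u (j + 1 - per u i j))"
definition Rr :: "('a \<Rightarrow> nat) \<Rightarrow> 'a list \<Rightarrow> nat \<Rightarrow> nat \<Rightarrow> nat \<Rightarrow> int list" where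
  "Rr f u i j x = rot f u (ob f u i j) i (per u i j) x"
definition MM :: "('a \<Rightarrow> nat) \<Rightarrow> 'a list \<Rightarrow> nat \<Rightarrow> nat \<Rightarrow> int list" where
  "MM f u i j = Min (Rr f u i j ` {i..<i + per u i j})"
definition BB :: "('a \<Rightarrow> nat) \<Rightarrow> 'a list \<Rightarrow> nat \<Rightarrow> nat \<Rightarrow> nat set" where
  "BB f u i j = {a. i < a \<and> a + per u i j \<le> j + 1 \<and> Rr f u i j a = MM f u i j}"

lemma MM_le:
  assumes "i \<le> j" "i \<le> y"
  shows "MM f u i j \<le> Rr f u i j y"
proof -
  have p: "0 < per u i j" using per_pos assms by blast
  have "Rr f u i j y = Rr f u i j (cp i (per u i j) y)"
    unfolding Rr_def using rot_cp assms by metis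
  moreover have "cp i (per u i j) y \<in> {i..<i + per u i j}" using cp_ge cp_lt[OF p] by auto
  ultimately show ?thesis unfolding MM_def by (metis Min_le finite_atLeastLessThan finite_imageI image_eqI)
qed

lemma MM_in:
  assumes "i \<le> j"
  shows "\<exists>a0\<in>{i..<i + per u i j}. Rr f u i j a0 = MM f u i j"
proof -
  have p: "0 < per u i j" using per_pos assms by blast
  have "MM f u i j \<in> Rr f u i j ` {i..<i + per u i j}"
    unfolding MM_def by (rule Min_in) (use p in auto)
  then show ?thesis by auto
qed

lemma right_ob:
  assumes inj: "inj_on f (set u)" and r: "is_run u i j" and jn: "j < length u"
  shows "VV f u (ob f u i j) (j + 1) < VV f u (ob f u i j) (j + 1 - per u i j)"
proof (cases "ob f u i j")
  case True
  then show ?thesis using jn by (simp add: ob_def VV_def)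
next
  case False
  have p: "per u i j \<le> j" using r per_pos[of i j u] unfolding is_run_def by linarith
  have ne: "letter u (j + 1 - per u i j) \<noteq> letter u (j + 1)"
    using r jn p unfolding is_run_def by (simp add: Suc_diff_le)
  have "letter u (j + 1 - per u i j) \<in> set u" "letter u (j+1) \<in> set u"
    using r jn p unfolding is_run_def letter_def by auto
  then have "f (letter u (j + 1 - per u i j)) \<noteq> f (letter u (j + 1))"
    using ne inj by (meson inj_onD)
  then show ?thesis using False jn by (auto simp: ob_def VV_def FF_def)
qed

lemma same_per:
  assumes r: "is_run u i j" and r': "is_run u i' j'" and pp: "per u i j = per u i' j'"
    and ia: "i \<le> a" and aj: "a + per u i j \<le> j + 1" and ia': "i' \<le> a" and aj': "a + per u i j \<le> j' + 1"
  shows "i = i' \<and> j = j'"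
proof -
  define p where "p = per u i j"
  have P: "is_period u i j p" using r per_is_period unfolding is_run_def p_def by blast
  have P': "is_period u i' j' p" using r' per_is_period unfolding is_run_def p_def pp by blast
  have p: "0 < p" using P is_period_def by blast
  have L: False if "is_run u i j" "is_run u i' j'" "per u i j = p" "per u i' j' = p"
    "is_period u i j p" "i < i'" "i' \<le> a" "a + p \<le> j + 1" for i j i' j'
  proof -
    have "letter u (i' - 1) = letter u (i' - 1 + 1 * p)"
      using period_steps[OF that(5), of "i' - 1" 1] that p by simp
    moreover have "letter u (i' - 1) \<noteq> letter u (i' + p - 1)" "i' \<noteq> 1"
      using that(1,2,4,6) unfolding is_run_def by auto
    ultimately show False using that(6) by (simp add: add.commute)
  qed
  have R: False if "is_run u i j" "is_run u i' j'" "per u i j = p" "per u i' j' = p"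
    "is_period u i' j' p" "j < j'" "i' \<le> a" "a + p \<le> j + 1" for i j i' j'
  proof -
    have "letter u (j + 1 - p) = letter u (j + 1 - p + 1 * p)"
      using period_steps[OF that(5), of "j + 1 - p" 1] that p by simp
    moreover have "letter u (j - p + 1) \<noteq> letter u (j + 1)" "j \<noteq> length u"
      using that(1,2,3,6) unfolding is_run_def by auto
    moreover have "p \<le> j" using that(2,7,8) unfolding is_run_def by linarith
    ultimately show False by (simp add: Suc_diff_le)
  qed
  have e1: "per u i j = p" by (simp add: p_def)
  have e2: "per u i' j' = p" using pp by (simp add: p_def)
  have aj0: "a + p \<le> j + 1" using aj by (simp add: p_def)
  have aj0': "a + p \<le> j' + 1" using aj' by (simp add: p_def)
  have "\<not> i < i'" using L[OF r r' e1 e2 P _ ia' aj0] by blast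
  moreover have "\<not> i' < i" using L[OF r' r e2 e1 P' _ ia aj0'] by blast
  moreover have "\<not> j < j'" using R[OF r r' e1 e2 P' _ ia' aj0] by blast
  moreover have "\<not> j' < j" using R[OF r' r e2 e1 P _ ia aj0'] by blast
  ultimately show ?thesis by simp
qed



lemma run_facts:
  assumes r: "is_run u i j"
  shows "is_period u i j (per u i j)" "1 \<le> i" "j \<le> length u" "i \<le> j" "0 < per u i j"
  using r per_is_period per_pos unfolding is_run_def by auto

lemma run_minr:
  assumes r: "is_run u i j"
  shows "\<forall>y\<ge>i. MM f u i j \<le> rot f u (ob f u i j) i (per u i j) y"
  using r MM_le[of i j _ f u] unfolding is_run_def Rr_def by auto

lemma first_lt_run:
  assumes inj: "inj_on f (set u)" and r: "is_run u i j" and a: "a \<in> BB f u i j" and p2: "2 \<le> per u i j"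
  shows "VV f u (ob f u i j) a < VV f u (ob f u i j) (a - 1)"
proof -
  note F = run_facts[OF r] run_minr[OF r, of f]
  have np1: "\<not> is_period u i j 1" using per_le[of u i j 1] p2 by auto
  show ?thesis
    by (rule first_lt[OF F(1) inj F(2) F(3) np1 F(6)]) (use a p2 in \<open>auto simp: BB_def Rr_def\<close>)
qed

lemma period1_eq:
  assumes r: "is_run u i j" and a: "a \<in> BB f u i j" and p1: "per u i j = 1"
  shows "letter u (a - 1) = letter u a"
proof -
  note F = run_facts[OF r] run_minr[OF r, of f]
  have "letter u (a - 1) = letter u (a - 1 + 1 * 1)"
    using period_steps[OF F(1)[unfolded p1], of "a - 1" 1] a p1 by (auto simp: BB_def)
  then show ?thesis using a by (auto simp: BB_def)
qed

lemma disjoint: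
  assumes inj: "inj_on f (set u)" and r: "is_run u i j" and r': "is_run u i' j'"
    and a: "a \<in> BB f u i j" and a': "a \<in> BB f u i' j'"
  shows "i = i' \<and> j = j'"
proof -
  note F = run_facts[OF r] run_minr[OF r, of f]
  note F' = run_facts[OF r'] run_minr[OF r', of f]
  define p where "p = per u i j"
  define p' where "p' = per u i' j'"
  have ab: "i < a" "a + p \<le> j + 1" "rot f u (ob f u i j) i p a = MM f u i j"
    using a by (auto simp: BB_def Rr_def p_def)
  have ab': "i' < a" "a + p' \<le> j' + 1" "rot f u (ob f u i' j') i' p' a = MM f u i' j'"
    using a' by (auto simp: BB_def Rr_def p'_def)
  show ?thesis
  proof (cases "p = p'")
    case True
    then show ?thesis using same_per[OF r r', of a] ab ab' by (simp add: p_def p'_def)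
  next
    case ne: False
    show ?thesis
    proof (cases "ob f u i j = ob f u i' j'")
      case True
      have P: "is_period u i j p" using F(1) by (simp add: p_def)
      have P': "is_period u i' j' p'" using F'(1) by (simp add: p'_def)
      have mr: "\<forall>y\<ge>i. MM f u i j \<le> rot f u (ob f u i j) i p y" using F(6) by (simp add: p_def)
      have mr': "\<forall>y\<ge>i'. MM f u i' j' \<le> rot f u (ob f u i j) i' p' y" using F'(6) True by (simp add: p'_def)
      have ab3': "rot f u (ob f u i j) i' p' a = MM f u i' j'" using ab'(3) True by simp
      have rt: "j < length u \<Longrightarrow> VV f u (ob f u i j) (j + 1) < VV f u (ob f u i j) (j + 1 - p)"
        using right_ob[OF inj r] by (simp add: p_def)
      have rt': "j' < length u \<Longrightarrow> VV f u (ob f u i j) (j' + 1) < VV f u (ob f u i j) (j' + 1 - p')"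
        using right_ob[OF inj r'] True by (simp add: p'_def)
      show ?thesis
      proof (cases "p < p'")
        case True
        have np: "\<not> is_period u i' j' p" using per_le[of u i' j' p] True by (auto simp: p'_def)
        have False
          by (rule same_order[OF P P' inj F(2) F'(2) F(3) F'(3) np mr ab(3) mr' ab3'
              less_imp_le[OF ab(1)] ab(2) less_imp_le[OF ab'(1)] ab'(2) True rt])
        then show ?thesis ..
      next
        case False
        then have lt: "p' < p" using ne by simp
        have np: "\<not> is_period u i j p'" using per_le[of u i j p'] lt by (auto simp: p_def)
        have False
          by (rule same_order[OF P' P inj F'(2) F(2) F'(3) F(3) np mr' ab3' mr ab(3)
              less_imp_le[OF ab'(1)] ab'(2) less_imp_le[OF ab(1)] ab(2) lt rt'])
        then show ?thesis ..
      qed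
    next
      case bne: False
      have pos: "1 \<le> p" "1 \<le> p'" using F(5) F'(5) by (auto simp: p_def p'_def)
      show ?thesis
      proof (cases "p = 1")
        case True
        then have "2 \<le> p'" using ne pos by simp
        then have "VV f u (ob f u i' j') a < VV f u (ob f u i' j') (a - 1)"
          using first_lt_run[OF inj r' a'] by (simp add: p'_def)
        moreover have "letter u (a - 1) = letter u a" using period1_eq[OF r a] True by (simp add: p_def)
        ultimately show ?thesis using VV_letter by (metis less_irrefl)
      next
        case False
        then have p2: "2 \<le> p" using pos by simp
        show ?thesis
        proof (cases "p' = 1")
          case True
          then have "VV f u (ob f u i j) a < VV f u (ob f u i j) (a - 1)"
            using first_lt_run[OF inj r a] p2 by (simp add: p_def)
          moreover have "letter u (a - 1) = letter u a" using period1_eq[OF r' a'] True by (simp add: p'_def)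
          ultimately show ?thesis using VV_letter by (metis less_irrefl)
        next
          case False
          then have "2 \<le> p'" using pos by simp
          then have "VV f u (ob f u i' j') a < VV f u (ob f u i' j') (a - 1)"
            using first_lt_run[OF inj r' a'] by (simp add: p'_def)
          moreover have "VV f u (ob f u i j) a < VV f u (ob f u i j) (a - 1)"
            using first_lt_run[OF inj r a] p2 by (simp add: p_def)
          ultimately show ?thesis using bne by (cases "ob f u i j") (auto simp: VV_def)
        qed
      qed
    qed
  qed
qed



lemma BB_sub: "BB f u i j \<subseteq> {..j+1}"
  by (auto simp: BB_def)

lemma count_BB:
  assumes r: "is_cubic_run u i j"
  shows "(j - i + 1) div per u i j - 1 \<le> card (BB f u i j)"
proof -
  have rr: "is_run u i j" using r by (simp add: is_cubic_run_def)
  note F = run_facts[OF rr] run_minr[OF rr, of f]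
  define p where "p = per u i j"
  define q where "q = (j - i + 1) div p"
  have p: "0 < p" using F(5) by (simp add: p_def)
  have q3: "3 \<le> q"
  proof -
    have "3 * p div p \<le> (j - i + 1) div p" using r by (intro div_le_mono) (simp add: is_cubic_run_def p_def)
    then show ?thesis using p by (simp add: q_def)
  qed
  have qp: "q * p \<le> j - i + 1" unfolding q_def by (rule div_times_less_eq_dividend)
  obtain a0 where a0: "i \<le> a0" "a0 < i + p" "Rr f u i j a0 = MM f u i j"
    using MM_in[OF F(4), of u f] by (auto simp: p_def)
  define a1 where "a1 = (if a0 = i then i + p else a0)"
  have a1: "i < a1" "a1 \<le> i + p" "(a1 - i) mod p = a0 - i"
    using a0 p by (auto simp: a1_def)
  define g where "g t = a1 + t * p" for t
  have inj: "inj_on g {..<q - 1}" using p by (auto simp: g_def inj_on_def)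
  have sub: "g ` {..<q - 1} \<subseteq> BB f u i j"
  proof
    fix x assume "x \<in> g ` {..<q - 1}"
    then obtain t where t: "t < q - 1" "x = g t" by auto
    have "t * p + p \<le> (q - 1) * p" using t by (metis Suc_leI add.commute mult_Suc mult_le_mono1)
    also have "(q - 1) * p = q * p - p" by (simp add: diff_mult_distrib)
    finally have "x + p \<le> j + 1" using t a1 qp q3 p by (simp add: g_def)
    moreover have "cp i p x = a0"
    proof -
      have "(x - i) mod p = ((a1 - i) + t * p) mod p" using a1 by (simp add: t g_def)
      also have "\<dots> = a0 - i" unfolding mod_mult_self1 by (rule a1(3))
      finally show ?thesis using a0 by (simp add: cp_def)
    qed
    then have "Rr f u i j x = MM f u i j"
      using rot_cp[of i x f u "ob f u i j" p] a0 a1 t by (simp add: Rr_def p_def g_def)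
    ultimately show "x \<in> BB f u i j" using a1 t by (auto simp: BB_def g_def p_def)
  qed
  have "card (g ` {..<q - 1}) = q - 1" using card_image[OF inj] by simp
  moreover have "finite (BB f u i j)" by (rule finite_subset[OF BB_sub]) simp
  ultimately show ?thesis using card_mono[OF _ sub] by (simp add: q_def p_def)
qed



lemma exp_bound:
  assumes r: "is_cubic_run u i j"
  shows "exponent u i j \<le> 2 * real (card (BB f u i j))"
proof -
  have rr: "is_run u i j" using r by (simp add: is_cubic_run_def)
  note F = run_facts[OF rr] run_minr[OF rr, of f]
  define p where "p = per u i j"
  define L where "L = j - i + 1"
  define q where "q = L div p"
  have p: "0 < p" using F(5) by (simp add: p_def)
  have q3: "3 \<le> q"
  proof -
    have "3 * p div p \<le> L div p" using r by (intro div_le_mono) (simp add: is_cubic_run_def p_def L_def)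
    then show ?thesis using p by (simp add: q_def)
  qed
  have c: "q - 1 \<le> card (BB f u i j)" using count_BB[OF r, of f] by (simp add: q_def L_def p_def)
  have "L < (q + 1) * p"
  proof -
    have "L = q * p + L mod p" by (simp add: q_def)
    moreover have "L mod p < p" using p by simp
    ultimately show ?thesis by simp
  qed
  then have "real L < real (q + 1) * real p" by (metis of_nat_less_iff of_nat_mult)
  then have "real L / real p < real (q + 1)" using p by (simp add: divide_less_eq)
  also have "real (q + 1) \<le> 2 * real (q - 1)" using q3 by linarith
  also have "\<dots> \<le> 2 * real (card (BB f u i j))" using c by simp
  finally show ?thesis by (simp add: exponent_def L_def p_def)
qed

theorem theorem3:
  fixes u :: "'a list" and \<Sigma> :: "'a set" and n :: nat
  assumes "finite \<Sigma>" and "set u \<subseteq> \<Sigma>" and "length u = n" and "0 < n"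
  shows "(\<Sum>(i, j)\<in>cubic_runs u. exponent u i j) < 2.5 * real n"
proof -
  obtain f :: "'a \<Rightarrow> nat" where inj: "inj_on f (set u)"
    using finite_imp_inj_to_nat_seg[of "set u"] by auto
  define C where "C = cubic_runs u"
  define B where "B r = BB f u (fst r) (snd r)" for r
  have Csub: "C \<subseteq> {1..n} \<times> {1..n}"
    using assms(3) by (auto simp: C_def cubic_runs_def is_cubic_run_def is_run_def)
  have finC: "finite C" by (rule finite_subset[OF Csub]) simp
  have finB: "finite (B r)" for r unfolding B_def by (rule finite_subset[OF BB_sub]) simp
  have disj: "\<forall>r\<in>C. \<forall>s\<in>C. r \<noteq> s \<longrightarrow> B r \<inter> B s = {}"
  proof (intro ballI impI)
    fix r s assume rs: "r \<in> C" "s \<in> C" "r \<noteq> s"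
    show "B r \<inter> B s = {}"
    proof (rule ccontr)
      assume "B r \<inter> B s \<noteq> {}"
      then obtain a where "a \<in> B r" "a \<in> B s" by auto
      with disjoint[OF inj, of "fst r" "snd r" "fst s" "snd s" a] rs
      show False by (auto simp: B_def C_def cubic_runs_def is_cubic_run_def prod_eq_iff)
    qed
  qed
  have Usub: "(\<Union>r\<in>C. B r) \<subseteq> {2..n}"
  proof
    fix a assume "a \<in> (\<Union>r\<in>C. B r)"
    then obtain i j where ij: "(i, j) \<in> C" "a \<in> BB f u i j" by (auto simp: B_def)
    then have rr: "is_run u i j" by (simp add: C_def cubic_runs_def is_cubic_run_def)
    note F = run_facts[OF rr] run_minr[OF rr, of f]
    show "a \<in> {2..n}" using ij(2) F(2,3,5) assms(3) by (auto simp: BB_def)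
  qed
  have "(\<Sum>r\<in>C. card (B r)) = card (\<Union>r\<in>C. B r)"
    using card_UN_disjoint[OF finC, of B] finB disj by simp
  also have "\<dots> \<le> n - 1" using card_mono[OF _ Usub] by simp
  finally have sumB: "(\<Sum>r\<in>C. card (B r)) \<le> n - 1" .
  have "(\<Sum>(i, j)\<in>C. exponent u i j) \<le> (\<Sum>r\<in>C. 2 * real (card (B r)))"
  proof (rule sum_mono)
    fix r assume "r \<in> C"
    then show "(case r of (i, j) \<Rightarrow> exponent u i j) \<le> 2 * real (card (B r))"
      using exp_bound[of u "fst r" "snd r" f] by (auto simp: C_def cubic_runs_def B_def split: prod.splits)
  qed
  also have "\<dots> = 2 * real (\<Sum>r\<in>C. card (B r))" by (simp add: sum_distrib_left)
  also have "\<dots> \<le> 2 * real (n - 1)"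
  proof -
    have "real (\<Sum>r\<in>C. card (B r)) \<le> real (n - 1)" using sumB by (rule of_nat_mono)
    then show ?thesis by linarith
  qed
  also have "\<dots> < 2.5 * real n" using assms(4) by simp
  finally show ?thesis by (simp add: C_def)
qed

end
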